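(* Let $G\ge 2$ and let $r_{t,1},\dots,r_{t,G}$ be i.i.d. random variables with values in $[0,1]$, having an absolutely continuous distribution with CDF $F$, density $f$, and mean $p_t$. Let $\hat p_t=\frac1G\sum_{i}r_{t,i}$, $\hat A_{t,i}=r_{t,i}-\hat p_t$, $A_{t,i}=r_{t,i}-p_t$. Fix $\sigma\in[0,1]$ and let $S_\sigma:=\{\exists\, i\ne j:\ |r_{t,i}-r_{t,j}|>\sigma\}$, so $S_\sigma^c=\{\max_i r_{t,i}-\min_i r_{t,i}\le\sigma\}$. For $u\in[0,1]$ let $u^+:=\min\{1,u+\sigma\}$, $q(u):=F(u^+)-F(u)$, and, when $q(u)>0$, $m(u):=\mathbb E[r_{t,1}\mid u\le r_{t,1}\le u^+]=\frac{\int_u^{u^+}xf(x)\,dx}{F(u^+)-F(u)}$. Then \[ \mathbb P(S_\sigma^c)=G\int_0^1 f(u)\,q(u)^{G-1}\,du,\qquad \mathbb P(S_\sigma)=1-\mathbb P(S_\sigma^c), \] \[ \mathbb E[\hat p_t\,\mathbf 1_{S_\sigma^c}]=\int_0^1\bigl(u+(G-1)m(u)\bigr)f(u)\,q(u)^{G-1}\,du, \] and, if $\mathbb P(S_\sigma)>0$, \[ \mathbb E[\hat p_t\mid S_\sigma]=\frac{p_t-\mathbb E[\hat p_t\,\mathbf 1_{S_\sigma^c}]}{\mathbb P(S_\sigma)},\qquad \mathbb E[\hat A_{t,i}-A_{t,i}\mid S_\sigma]=p_t-\mathbb E[\hat p_t\mid S_\sigma]\ \text{ for all } i. \]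
   Context: Non-binary reward extension of the group-relative setting: $G$ rewards in $[0,1]$ for one prompt, group baseline $\hat p_t$, group-relative advantage $\hat A_{t,i}$, expected advantage $A_{t,i}$; $S_\sigma$ is the "update" event that some two rewards in the group differ by more than $\sigma$. In the integrand, $m(u)$ is only needed where $q(u)>0$ (the integrand vanishes otherwise). *)

theory Defs
  imports "HOL-Probability.Probability"
begin

definition cond_exp_event :: "'a measure \<Rightarrow> ('a \<Rightarrow> real) \<Rightarrow> 'a set \<Rightarrow> real" where
  "cond_exp_event M X S = (\<integral>\<omega>. X \<omega> * indicator S \<omega> \<partial>M) / measure M S"

end

theory Submission
  imports Defs
begin

lemma tonelli_comp:
  fixes D :: "real measure" and g :: "real \<Rightarrow> ennreal" and \<psi> :: "nat \<Rightarrow> real \<Rightarrow> real \<Rightarrow> ennreal"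
  assumes D: "prob_space D" and sD: "sets D = sets borel" and I: "finite I" "k \<in> I"
    and g[measurable]: "g \<in> borel_measurable borel"
    and psi: "\<And>j. (\<lambda>z. \<psi> j (fst z) (snd z)) \<in> borel_measurable (borel \<Otimes>\<^sub>M borel)"
  shows "(\<integral>\<^sup>+ x. g (x k) * (\<Prod>j\<in>I-{k}. \<psi> j (x k) (x j)) \<partial>PiM I (\<lambda>_. D))
       = (\<integral>\<^sup>+ u. g u * (\<Prod>j\<in>I-{k}. \<integral>\<^sup>+ y. \<psi> j u y \<partial>D) \<partial>D)"
proof -
  interpret prob_space D by fact
  interpret P: product_sigma_finite "\<lambda>_. D"
    by (simp add: product_sigma_finite_def sigma_finite_measure_axioms)
  have II: "I = insert k (I - {k})" using I by auto
  have gD[measurable]: "g \<in> borel_measurable D" using g measurable_cong_sets[OF sD refl] by blast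
  have psi2: "(\<lambda>x. \<psi> j (x a) (x b)) \<in> borel_measurable (PiM J (\<lambda>_. D))" if "a \<in> J" "b \<in> J" for j a b J
  proof -
    have "(\<lambda>x. (x a, x b)) \<in> measurable (PiM J (\<lambda>_. D)) (borel \<Otimes>\<^sub>M borel)"
      using that by (intro measurable_Pair) (auto simp: measurable_cong_sets[OF refl sD, symmetric])
    from measurable_comp[OF this psi[of j]] show ?thesis by (simp add: comp_def)
  qed
  have psi1: "(\<lambda>y. \<psi> j u y) \<in> borel_measurable D" for j u
  proof -
    have "(\<lambda>y. (u, y)) \<in> measurable D (borel \<Otimes>\<^sub>M borel)"
      by (intro measurable_Pair) (auto simp: measurable_cong_sets[OF sD refl])
    from measurable_comp[OF this psi[of j]] show ?thesis by (simp add: comp_def)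
  qed
  have meas: "(\<lambda>x. g (x k) * (\<Prod>j\<in>I-{k}. \<psi> j (x k) (x j))) \<in> borel_measurable (PiM I (\<lambda>_. D))"
  proof (intro borel_measurable_times_ennreal borel_measurable_prod_ennreal)
    show "(\<lambda>x. g (x k)) \<in> borel_measurable (PiM I (\<lambda>_. D))"
      using I by (intro measurable_compose[OF _ gD]) auto
    show "(\<lambda>x. \<psi> j (x k) (x j)) \<in> borel_measurable (PiM I (\<lambda>_. D))" if "j \<in> I - {k}" for j
      using that I by (intro psi2) auto
  qed
  have "(\<integral>\<^sup>+ x. g (x k) * (\<Prod>j\<in>I-{k}. \<psi> j (x k) (x j)) \<partial>PiM I (\<lambda>_. D))
     = (\<integral>\<^sup>+ u. (\<integral>\<^sup>+ x. g u * (\<Prod>j\<in>I-{k}. \<psi> j u (x j)) \<partial>PiM (I-{k}) (\<lambda>_. D)) \<partial>D)"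
    apply (subst II)
    apply (subst P.product_nn_integral_insert_rev)
    using I meas II apply auto[3]
    apply (intro nn_integral_cong arg_cong2[where f="(*)"] prod.cong)
    apply auto
    done
  also have "\<dots> = (\<integral>\<^sup>+ u. g u * (\<Prod>j\<in>I-{k}. \<integral>\<^sup>+ y. \<psi> j u y \<partial>D) \<partial>D)"
    apply (intro nn_integral_cong)
    apply (subst nn_integral_cmult)
    using I apply (auto intro!: borel_measurable_prod_ennreal psi2 measurable_compose[OF _ psi1] measurable_component_singleton)[1]
    apply (subst P.product_nn_integral_prod)
    using I psi1 by auto
  finally show ?thesis .
qed

definition Jint :: "real \<Rightarrow> nat \<Rightarrow> nat \<Rightarrow> real \<Rightarrow> real set" where
  "Jint \<sigma> k j u = (if j < k then {u<..u+\<sigma>} else {u..u+\<sigma>})"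

lemma partition_count:
  fixes x :: "nat \<Rightarrow> real" and G :: nat
  assumes G: "G \<ge> 1" and s: "0 \<le> \<sigma>"
  shows "{k\<in>{..<G}. \<forall>j\<in>{..<G}-{k}. x j \<in> Jint \<sigma> k j (x k)}
     = (if \<not> (\<exists>i<G. \<exists>j<G. i \<noteq> j \<and> \<bar>x i - x j\<bar> > \<sigma>) then {LEAST k. k < G \<and> x k = Min (x ` {..<G})} else {})"
proof -
  define m0 where "m0 = Min (x ` {..<G})"
  define k0 where "k0 = (LEAST k. k < G \<and> x k = m0)"
  have fin: "finite (x ` {..<G})" by simp
  have "x 0 \<in> x ` {..<G}" using G by simp
  then have ne: "x ` {..<G} \<noteq> {}" by blast
  have m0le: "m0 \<le> x j" if "j < G" for j using that fin by (auto simp: m0_def)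
  have "m0 \<in> x ` {..<G}" unfolding m0_def using fin ne by (rule Min_in)
  then obtain k1 where k1: "k1 < G" "x k1 = m0" by auto
  have k0: "k0 < G \<and> x k0 = m0" unfolding k0_def by (rule LeastI[of _ k1]) (use k1 in auto)
  have k0min: "\<not> (j < G \<and> x j = m0)" if "j < k0" for j
    using not_less_Least[of j "\<lambda>k. k < G \<and> x k = m0"] that unfolding k0_def by blast
  have Q_imp: "k = k0 \<and> \<not> (\<exists>i<G. \<exists>j<G. i \<noteq> j \<and> \<bar>x i - x j\<bar> > \<sigma>)"
    if k: "k < G" and Q: "\<forall>j\<in>{..<G}-{k}. x j \<in> Jint \<sigma> k j (x k)" for k
  proof -
    have ge: "x k \<le> x j \<and> x j \<le> x k + \<sigma>" if "j < G" for j
    proof (cases "j = k")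
      case True then show ?thesis using s by simp
    next
      case False
      then have "x j \<in> Jint \<sigma> k j (x k)" using Q that by simp
      then show ?thesis by (cases "j < k") (simp_all add: Jint_def)
    qed
    have xk: "x k = m0" using ge[OF k0[THEN conjunct1]] k0 m0le[OF k] by auto
    have "k0 \<le> k" unfolding k0_def by (rule Least_le) (use k xk in auto)
    moreover have "\<not> k0 < k"
    proof
      assume "k0 < k"
      moreover have "k0 \<in> {..<G}-{k}" using k0 \<open>k0 < k\<close> by auto
      then have "x k0 \<in> Jint \<sigma> k k0 (x k)" using Q by blast
      then have "x k0 \<in> {x k<..x k+\<sigma>}" using \<open>k0 < k\<close> unfolding Jint_def by simp
      then show False using xk k0 by auto
    qed
    ultimately have "k = k0" by auto
    moreover have "\<bar>x i - x j\<bar> \<le> \<sigma>" if "i < G" "j < G" for i j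
      using ge[OF that(1)] ge[OF that(2)] by auto
    ultimately show ?thesis by (meson not_le)
  qed
  have Q0: "\<forall>j\<in>{..<G}-{k0}. x j \<in> Jint \<sigma> k0 j (x k0)"
    if nS: "\<not> (\<exists>i<G. \<exists>j<G. i \<noteq> j \<and> \<bar>x i - x j\<bar> > \<sigma>)"
  proof
    fix j assume j: "j \<in> {..<G}-{k0}"
    have a: "x j \<ge> x k0" using m0le[of j] j k0 by auto
    have b: "x j \<le> x k0 + \<sigma>" using nS j k0 by force
    have c: "x j \<noteq> x k0" if "j < k0" using k0min[OF that] j k0 by auto
    show "x j \<in> Jint \<sigma> k0 j (x k0)" using a b c by (auto simp: Jint_def)
  qed
  show ?thesis
  proof (cases "\<exists>i<G. \<exists>j<G. i \<noteq> j \<and> \<bar>x i - x j\<bar> > \<sigma>")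
    case True
    then show ?thesis using Q_imp by auto
  next
    case False
    have "{k\<in>{..<G}. \<forall>j\<in>{..<G}-{k}. x j \<in> Jint \<sigma> k j (x k)} = {k0}"
    proof (intro equalityI subsetI)
      fix k assume "k \<in> {k\<in>{..<G}. \<forall>j\<in>{..<G}-{k}. x j \<in> Jint \<sigma> k j (x k)}"
      then show "k \<in> {k0}" using Q_imp[of k] by simp
    next
      fix k assume "k \<in> {k0}"
      then show "k \<in> {k\<in>{..<G}. \<forall>j\<in>{..<G}-{k}. x j \<in> Jint \<sigma> k j (x k)}"
        using Q0[OF False] k0 by simp
    qed
    then show ?thesis using False unfolding k0_def m0_def by simp
  qed
qed

theorem theorem4:
  fixes M :: "'a measure" and G :: nat and r :: "nat \<Rightarrow> 'a \<Rightarrow> real"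
    and f :: "real \<Rightarrow> real" and \<sigma> :: real
  assumes "prob_space M"
    and "G \<ge> 2"
    and "prob_space.indep_vars M (\<lambda>_. borel) r {..<G}"
    and "\<And>x. 0 \<le> f x"
    and "\<And>i. i < G \<Longrightarrow> distributed M lborel (r i) (\<lambda>x. ennreal (f x))"
    and "\<And>i \<omega>. i < G \<Longrightarrow> \<omega> \<in> space M \<Longrightarrow> r i \<omega> \<in> {0..1}"
    and "0 \<le> \<sigma>" and "\<sigma> \<le> 1"
  defines "p \<equiv> (\<integral>\<omega>. r 0 \<omega> \<partial>M)"
    and "phat \<equiv> (\<lambda>\<omega>. (\<Sum>i<G. r i \<omega>) / real G)"
    and "Ahat \<equiv> (\<lambda>i \<omega>. r i \<omega> - (\<Sum>k<G. r k \<omega>) / real G)"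
    and "A \<equiv> (\<lambda>i \<omega>. r i \<omega> - (\<integral>\<omega>'. r 0 \<omega>' \<partial>M))"
    and "S \<equiv> {\<omega> \<in> space M. \<exists>i<G. \<exists>j<G. i \<noteq> j \<and> \<bar>r i \<omega> - r j \<omega>\<bar> > \<sigma>}"
    and "Sc \<equiv> {\<omega> \<in> space M. \<not> (\<exists>i<G. \<exists>j<G. i \<noteq> j \<and> \<bar>r i \<omega> - r j \<omega>\<bar> > \<sigma>)}"
    and "q \<equiv> (\<lambda>u. cdf (distr M borel (r 0)) (min 1 (u + \<sigma>)) - cdf (distr M borel (r 0)) u)"
    and "m \<equiv> (\<lambda>u. (LBINT x:{u..min 1 (u + \<sigma>)}. x * f x) /
        (cdf (distr M borel (r 0)) (min 1 (u + \<sigma>)) - cdf (distr M borel (r 0)) u))"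
  shows "measure M Sc = real G * (LBINT u:{0..1}. f u * q u ^ (G - 1))
    \<and> measure M S = 1 - measure M Sc
    \<and> (\<integral>\<omega>. phat \<omega> * indicator Sc \<omega> \<partial>M)
           = (LBINT u:{0..1}. (u + real (G - 1) * m u) * f u * q u ^ (G - 1))
    \<and> (measure M S > 0 \<longrightarrow>
           cond_exp_event M phat S = (p - (\<integral>\<omega>. phat \<omega> * indicator Sc \<omega> \<partial>M)) / measure M S
         \<and> (\<forall>i<G. cond_exp_event M (\<lambda>\<omega>. Ahat i \<omega> - A i \<omega>) S = p - cond_exp_event M phat S))"
proof -
  interpret prob_space M by fact
  define I where "I = {..<G}"
  define D where "D = density lborel (\<lambda>x. ennreal (f x))"
  have G1: "G \<ge> 1" using assms(2) by simp
  have rvl: "r i \<in> measurable M lborel" if "i < G" for i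
    using distributed_measurable[OF assms(5)[OF that]] .
  have rv[measurable]: "r i \<in> borel_measurable M" if "i < G" for i
    using rvl[OF that] measurable_cong_sets[OF refl sets_lborel] by blast
  have fmeas[measurable]: "f \<in> borel_measurable borel"
    using distributed_real_measurable[OF _ assms(5)[of 0]] assms(4) G1
      measurable_cong_sets[OF sets_lborel refl] by auto
  have sD: "sets D = sets borel" by (simp add: D_def)
  have spD: "space D = UNIV" by (simp add: D_def)
  have distrD: "distr M borel (r i) = D" if "i < G" for i
  proof -
    have "distr M borel (r i) = distr M lborel (r i)" by (rule distr_cong) simp_all
    also have "\<dots> = D" unfolding D_def by (rule distributed_distr_eq_density[OF assms(5)[OF that]])
    finally show ?thesis .
  qed
  have d0: "distr M borel (r 0) = D" using distrD G1 by simp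
  have pD: "prob_space D" using prob_space_distr[OF rv[of 0]] d0 G1 by simp
  interpret D: prob_space D by fact
  have AE01: "AE x in D. x \<in> {0..1}"
  proof -
    have "AE x in distr M borel (r 0). x \<in> {0..1}"
      using G1 assms(6)[of 0] by (subst AE_distr_iff) auto
    then show ?thesis by (simp only: d0)
  qed
  have pt0: "AE x in D. x \<noteq> u" for u
  proof -
    have "AE x in lborel. x \<noteq> u" by (rule AE_lborel_singleton)
    then show ?thesis unfolding D_def by (subst AE_density) (auto elim: AE_mp)
  qed
  have q_eq: "q u = measure D {u<..min 1 (u+\<sigma>)}" if "u \<in> {0..1}" for u
  proof -
    have un: "{..min 1 (u+\<sigma>)} = {..u} \<union> {u<..min 1 (u+\<sigma>)}" using that assms(7) by auto
    have "measure D {..min 1 (u+\<sigma>)} = measure D {..u} + measure D {u<..min 1 (u+\<sigma>)}"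
      unfolding un by (rule D.finite_measure_Union) (auto simp: sD)
    then show ?thesis unfolding q_def d0 cdf_def by simp
  qed
  have q_nonneg: "0 \<le> q u" if "u \<in> {0..1}" for u using q_eq[OF that] by simp
  have qD: "emeasure D {u<..u+\<sigma>} = ennreal (q u)" "emeasure D {u..u+\<sigma>} = ennreal (q u)"
    "emeasure D {u..min 1 (u+\<sigma>)} = ennreal (q u)" if "u \<in> {0..1}" for u
  proof -
    have e: "emeasure D {u<..min 1 (u+\<sigma>)} = ennreal (q u)"
      using q_eq[OF that] D.emeasure_eq_measure by simp
    have ae: "AE x in D. x \<in> {0..1} \<and> x \<noteq> u" using AE01 pt0[of u] by eventually_elim auto
    show "emeasure D {u<..u+\<sigma>} = ennreal (q u)" unfolding e[symmetric]
      by (rule emeasure_eq_AE) (use ae in \<open>auto simp: sD elim!: AE_mp\<close>)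
    show "emeasure D {u..u+\<sigma>} = ennreal (q u)" unfolding e[symmetric]
      by (rule emeasure_eq_AE) (use ae in \<open>auto simp: sD elim!: AE_mp\<close>)
    show "emeasure D {u..min 1 (u+\<sigma>)} = ennreal (q u)" unfolding e[symmetric]
      by (rule emeasure_eq_AE) (use ae in \<open>auto simp: sD elim!: AE_mp\<close>)
  qed
  define Hr where "Hr u = (LBINT x:{u..min 1 (u + \<sigma>)}. x * f x)" for u
  have Hr_meas[measurable]: "Hr \<in> borel_measurable borel"
  proof -
    have "(\<lambda>u. \<integral>x. (if u \<le> x \<and> x \<le> min 1 (u+\<sigma>) then x * f x else 0) \<partial>lborel) \<in> borel_measurable borel"
      by measurable
    moreover have "Hr = (\<lambda>u. \<integral>x. (if u \<le> x \<and> x \<le> min 1 (u+\<sigma>) then x * f x else 0) \<partial>lborel)"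
      unfolding Hr_def set_lebesgue_integral_def by (auto intro!: ext Bochner_Integration.integral_cong simp: indicator_def)
    ultimately show ?thesis by simp
  qed
  have q_meas[measurable]: "q \<in> borel_measurable borel"
  proof -
    have [measurable]: "cdf D \<in> borel_measurable borel"
      by (rule borel_measurable_mono) (simp add: mono_def finite_borel_measure.cdf_nondecreasing
           finite_borel_measure.intro finite_borel_measure_axioms.intro D.finite_measure_axioms sD)
    show ?thesis unfolding q_def d0 by measurable
  qed
  have intf: "(\<integral>\<^sup>+ y. ennreal (indicator A y * f y) \<partial>lborel) = emeasure D A" if "A \<in> sets borel" for A
    unfolding D_def using that
    by (subst emeasure_density) (auto intro!: nn_integral_cong simp: indicator_def)
  have HrN: "Hr u = enn2real (\<integral>\<^sup>+ y. ennreal (indicator {u..min 1 (u+\<sigma>)} y * (y * f y)) \<partial>lborel)"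
    and HrB: "(\<integral>\<^sup>+ y. ennreal (indicator {u..min 1 (u+\<sigma>)} y * (y * f y)) \<partial>lborel) \<le> ennreal (q u)"
    if u: "u \<in> {0..1}" for u
  proof -
    show "Hr u = enn2real (\<integral>\<^sup>+ y. ennreal (indicator {u..min 1 (u+\<sigma>)} y * (y * f y)) \<partial>lborel)"
      unfolding Hr_def set_lebesgue_integral_def using u assms(4)
      by (subst integral_eq_nn_integral) (auto simp: indicator_def)
    have "(\<integral>\<^sup>+ y. ennreal (indicator {u..min 1 (u+\<sigma>)} y * (y * f y)) \<partial>lborel)
        \<le> (\<integral>\<^sup>+ y. ennreal (indicator {u..min 1 (u+\<sigma>)} y * f y) \<partial>lborel)"
      using u assms(4) by (intro nn_integral_mono) (auto simp: indicator_def intro!: mult_left_le_one_le)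
    also have "\<dots> = ennreal (q u)" using intf[of "{u..min 1 (u+\<sigma>)}"] qD(3)[OF u] by simp
    finally show "(\<integral>\<^sup>+ y. ennreal (indicator {u..min 1 (u+\<sigma>)} y * (y * f y)) \<partial>lborel) \<le> ennreal (q u)" .
  qed
  have HrE: "ennreal (Hr u) = (\<integral>\<^sup>+ y. ennreal (indicator {u..min 1 (u+\<sigma>)} y * (y * f y)) \<partial>lborel)"
    if u: "u \<in> {0..1}" for u
  proof -
    have "(\<integral>\<^sup>+ y. ennreal (indicator {u..min 1 (u+\<sigma>)} y * (y * f y)) \<partial>lborel) < \<top>"
      using HrB[OF u] by (rule le_less_trans) simp
    then show ?thesis using HrN[OF u] by simp
  qed
  have Hr_bounds: "0 \<le> Hr u \<and> Hr u \<le> q u" if u: "u \<in> {0..1}" for u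
  proof -
    have "ennreal (Hr u) \<le> ennreal (q u)" using HrE[OF u] HrB[OF u] by simp
    then show ?thesis using q_nonneg[OF u] HrN[OF u] by (simp add: enn2real_nonneg)
  qed
  have aeu: "AE x in D. x \<in> {0..1} \<and> x \<noteq> u" for u using AE01 pt0[of u] by eventually_elim auto
  have JqD: "emeasure D (Jint \<sigma> k j u) = ennreal (q u)" if u: "u \<in> {0..1}" for k j u
    using qD[OF u] by (simp add: Jint_def)
  have JHD: "(\<integral>\<^sup>+ y. ennreal y * indicator (Jint \<sigma> k j u) y \<partial>D) = ennreal (Hr u)" if u: "u \<in> {0..1}" for k j u
  proof -
    have "(\<integral>\<^sup>+ y. ennreal y * indicator (Jint \<sigma> k j u) y \<partial>D)
        = (\<integral>\<^sup>+ y. ennreal (indicator {u..min 1 (u+\<sigma>)} y * y) \<partial>D)"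
      using aeu[of u] by (rule nn_integral_cong_AE[OF AE_mp]) (auto simp: Jint_def indicator_def)
    also have "\<dots> = (\<integral>\<^sup>+ y. ennreal (f y) * ennreal (indicator {u..min 1 (u+\<sigma>)} y * y) \<partial>lborel)"
      unfolding D_def by (subst nn_integral_density) auto
    also have "\<dots> = (\<integral>\<^sup>+ y. ennreal (indicator {u..min 1 (u+\<sigma>)} y * (y * f y)) \<partial>lborel)"
      using u assms(4) by (intro nn_integral_cong) (auto simp: indicator_def ennreal_mult'' mult.commute)
    finally show ?thesis using HrE[OF u] by simp
  qed
  define R where "R \<omega> = (\<lambda>i\<in>I. r i \<omega>)" for \<omega>
  have Rm[measurable]: "R \<in> measurable M (PiM I (\<lambda>_. borel))"
    unfolding R_def by (rule measurable_restrict) (auto simp: I_def)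
  have Rdistr: "distr M (PiM I (\<lambda>_. borel)) R = PiM I (\<lambda>_. D)"
  proof -
    have "0 \<in> I" using G1 by (simp add: I_def)
    then have "I \<noteq> {}" by blast
    from indep_vars_iff_distr_eq_PiM'[OF this, where M'="\<lambda>_. borel" and X=r] assms(3)
    have "distr M (PiM I (\<lambda>_. borel)) R = PiM I (\<lambda>i. distr M borel (r i))"
      unfolding R_def I_def by auto
    also have "\<dots> = PiM I (\<lambda>_. D)" by (rule PiM_cong) (auto simp: I_def distrD)
    finally show ?thesis .
  qed
  have transfer: "(\<integral>\<^sup>+ \<omega>. g (R \<omega>) \<partial>M) = (\<integral>\<^sup>+ x. g x \<partial>PiM I (\<lambda>_. D))"
    if g: "g \<in> borel_measurable (PiM I (\<lambda>_. borel))" for g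
  proof -
    have sP: "sets (PiM I (\<lambda>_. D)) = sets (PiM I (\<lambda>_. borel))" by (rule sets_PiM_cong) (auto simp: sD)
    have "g \<in> borel_measurable (PiM I (\<lambda>_. D))" using g measurable_cong_sets[OF sP refl] by blast
    then show ?thesis using nn_integral_distr[OF Rm, of g] Rdistr by simp
  qed
  have Jmeas: "(\<lambda>z. indicator (Jint \<sigma> k j (fst z)) (snd z) :: ennreal) \<in> borel_measurable (borel \<Otimes>\<^sub>M borel)" for k j
  proof -
    have "(\<lambda>z::real\<times>real. if (if j < k then fst z < snd z else fst z \<le> snd z) \<and> snd z \<le> fst z + \<sigma> then 1 else 0 :: ennreal)
       \<in> borel_measurable (borel \<Otimes>\<^sub>M borel)" by measurable
    moreover have "(\<lambda>z. indicator (Jint \<sigma> k j (fst z)) (snd z) :: ennreal)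
       = (\<lambda>z::real\<times>real. if (if j < k then fst z < snd z else fst z \<le> snd z) \<and> snd z \<le> fst z + \<sigma> then 1 else 0 :: ennreal)"
      by (auto simp: Jint_def indicator_def fun_eq_iff)
    ultimately show ?thesis by simp
  qed
  have Jsets: "Jint \<sigma> k j u \<in> sets D" for k j u by (simp add: Jint_def sD)
  define \<Psi> where "\<Psi> k x = (\<Prod>j\<in>I-{k}. indicator (Jint \<sigma> k j (x k)) (x j) :: ennreal)" for k x
  have Psi_meas: "\<Psi> k \<in> borel_measurable (PiM I (\<lambda>_. borel))" if k: "k \<in> I" for k
    unfolding \<Psi>_def
  proof (rule borel_measurable_prod_ennreal)
    fix j assume j: "j \<in> I - {k}"
    have "(\<lambda>x. (x k, x j)) \<in> measurable (PiM I (\<lambda>_. borel)) (borel \<Otimes>\<^sub>M borel)"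
      using j k by (intro measurable_Pair) auto
    from measurable_comp[OF this Jmeas[of k j]]
    show "(\<lambda>x. indicator (Jint \<sigma> k j (x k)) (x j) :: ennreal) \<in> borel_measurable (PiM I (\<lambda>_. borel))"
      by (simp add: comp_def)
  qed
  have Psi_if: "\<Psi> k x = (if \<forall>j\<in>I-{k}. x j \<in> Jint \<sigma> k j (x k) then 1 else 0)" for k x
  proof (cases "\<forall>j\<in>I-{k}. x j \<in> Jint \<sigma> k j (x k)")
    case True then show ?thesis unfolding \<Psi>_def by (intro trans[OF prod.neutral]) auto
  next
    case False
    then obtain j where "j \<in> I-{k}" "x j \<notin> Jint \<sigma> k j (x k)" by blast
    then have "\<Psi> k x = 0" unfolding \<Psi>_def by (intro prod_zero) (auto simp: I_def intro!: bexI[of _ j])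
    then show ?thesis using False by simp
  qed
  have Psum: "(\<Sum>k\<in>I. \<Psi> k x) = (if \<not> (\<exists>i<G. \<exists>j<G. i \<noteq> j \<and> \<bar>x i - x j\<bar> > \<sigma>) then 1 else 0)" for x
  proof -
    have "(\<Sum>k\<in>I. \<Psi> k x) = (\<Sum>k\<in>{k\<in>{..<G}. \<forall>j\<in>{..<G}-{k}. x j \<in> Jint \<sigma> k j (x k)}. 1)"
      unfolding Psi_if by (subst sum.inter_filter) (auto simp: I_def)
    also have "\<dots> = (if \<not> (\<exists>i<G. \<exists>j<G. i \<noteq> j \<and> \<bar>x i - x j\<bar> > \<sigma>) then 1 else 0)"
      unfolding partition_count[OF G1 assms(7)] by simp
    finally show ?thesis .
  qed
  have finI: "finite I" by (simp add: I_def)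
  have cardk: "card (I - {k}) = G - 1" if "k \<in> I" for k using that by (simp add: I_def)
  define T0 where "T0 = (\<integral>\<^sup>+ u. ennreal (indicator {0..1} u * q u ^ (G - 1)) \<partial>D)"
  define T1 where "T1 = (\<integral>\<^sup>+ u. ennreal (indicator {0..1} u * (u * q u ^ (G - 1))) \<partial>D)"
  define T2 where "T2 = (\<integral>\<^sup>+ u. ennreal (indicator {0..1} u * (Hr u * q u ^ (G - 2))) \<partial>D)"
  have A_k: "(\<integral>\<^sup>+ x. \<Psi> k x \<partial>PiM I (\<lambda>_. D)) = T0" if k: "k \<in> I" for k
  proof -
    have "(\<integral>\<^sup>+ x. \<Psi> k x \<partial>PiM I (\<lambda>_. D))
       = (\<integral>\<^sup>+ x. (\<lambda>_. 1) (x k) * (\<Prod>j\<in>I-{k}. indicator (Jint \<sigma> k j (x k)) (x j)) \<partial>PiM I (\<lambda>_. D))"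
      by (simp add: \<Psi>_def)
    also have "\<dots> = (\<integral>\<^sup>+ u. 1 * (\<Prod>j\<in>I-{k}. \<integral>\<^sup>+ y. indicator (Jint \<sigma> k j u) y \<partial>D) \<partial>D)"
      by (rule tonelli_comp[OF pD sD finI k _ Jmeas[unfolded split_beta']]) simp
    also have "\<dots> = T0" unfolding T0_def
    proof (rule nn_integral_cong_AE)
      show "AE u in D. 1 * (\<Prod>j\<in>I-{k}. \<integral>\<^sup>+ y. indicator (Jint \<sigma> k j u) y \<partial>D)
               = ennreal (indicator {0..1} u * q u ^ (G - 1))"
        using AE01
      proof eventually_elim
        case (elim u)
        then show ?case using cardk[OF k] q_nonneg[OF elim]
          by (simp add: Jsets JqD[OF elim] ennreal_power)
      qed
    qed
    finally show ?thesis .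
  qed
  have B_kk: "(\<integral>\<^sup>+ x. ennreal (x k) * \<Psi> k x \<partial>PiM I (\<lambda>_. D)) = T1" if k: "k \<in> I" for k
  proof -
    have "(\<integral>\<^sup>+ x. ennreal (x k) * \<Psi> k x \<partial>PiM I (\<lambda>_. D))
       = (\<integral>\<^sup>+ u. ennreal u * (\<Prod>j\<in>I-{k}. \<integral>\<^sup>+ y. indicator (Jint \<sigma> k j u) y \<partial>D) \<partial>D)"
      unfolding \<Psi>_def by (rule tonelli_comp[OF pD sD finI k _ Jmeas[unfolded split_beta']]) simp
    also have "\<dots> = T1" unfolding T1_def
    proof (rule nn_integral_cong_AE)
      show "AE u in D. ennreal u * (\<Prod>j\<in>I-{k}. \<integral>\<^sup>+ y. indicator (Jint \<sigma> k j u) y \<partial>D)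
               = ennreal (indicator {0..1} u * (u * q u ^ (G - 1)))"
        using AE01
      proof eventually_elim
        case (elim u)
        then show ?case using cardk[OF k] q_nonneg[OF elim]
          by (simp add: Jsets JqD[OF elim] ennreal_power ennreal_mult)
      qed
    qed
    finally show ?thesis .
  qed
  have B_kj: "(\<integral>\<^sup>+ x. ennreal (x j) * \<Psi> k x \<partial>PiM I (\<lambda>_. D)) = T2" if k: "k \<in> I" and j: "j \<in> I - {k}" for k j
  proof -
    define \<psi> where "\<psi> j' u y = (if j' = j then ennreal y else 1) * (indicator (Jint \<sigma> k j' u) y :: ennreal)" for j' u y
    have psim: "(\<lambda>z. \<psi> j' (fst z) (snd z)) \<in> borel_measurable (borel \<Otimes>\<^sub>M borel)" for j'
      unfolding \<psi>_def using Jmeas[of k j'] by measurable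
    have "(\<integral>\<^sup>+ x. ennreal (x j) * \<Psi> k x \<partial>PiM I (\<lambda>_. D))
       = (\<integral>\<^sup>+ x. (\<lambda>_. 1) (x k) * (\<Prod>j'\<in>I-{k}. \<psi> j' (x k) (x j')) \<partial>PiM I (\<lambda>_. D))"
    proof (rule nn_integral_cong)
      fix x
      have "(\<Prod>j'\<in>I-{k}. \<psi> j' (x k) (x j'))
          = (\<Prod>j'\<in>I-{k}. (if j' = j then ennreal (x j') else 1)) * \<Psi> k x"
        unfolding \<psi>_def \<Psi>_def by (rule prod.distrib)
      also have "\<dots> = ennreal (x j) * \<Psi> k x" using j finI by (subst prod.delta) auto
      finally show "ennreal (x j) * \<Psi> k x = (\<lambda>_. 1) (x k) * (\<Prod>j'\<in>I-{k}. \<psi> j' (x k) (x j'))" by simp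
    qed
    also have "\<dots> = (\<integral>\<^sup>+ u. 1 * (\<Prod>j'\<in>I-{k}. \<integral>\<^sup>+ y. \<psi> j' u y \<partial>D) \<partial>D)"
      by (rule tonelli_comp[OF pD sD finI k _ psim]) simp
    also have "\<dots> = T2" unfolding T2_def
    proof (rule nn_integral_cong_AE)
      show "AE u in D. 1 * (\<Prod>j'\<in>I-{k}. \<integral>\<^sup>+ y. \<psi> j' u y \<partial>D)
               = ennreal (indicator {0..1} u * (Hr u * q u ^ (G - 2)))"
        using AE01
      proof eventually_elim
        case (elim u)
        have "(\<Prod>j'\<in>I-{k}. \<integral>\<^sup>+ y. \<psi> j' u y \<partial>D)
            = (\<integral>\<^sup>+ y. \<psi> j u y \<partial>D) * (\<Prod>j'\<in>I-{k}-{j}. \<integral>\<^sup>+ y. \<psi> j' u y \<partial>D)"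
          using j finI by (subst prod.remove[of _ j]) auto
        also have "\<dots> = ennreal (Hr u) * (\<Prod>j'\<in>I-{k}-{j}. ennreal (q u))"
          using JHD[OF elim] by (intro arg_cong2[where f="(*)"] prod.cong) (auto simp: \<psi>_def Jsets JqD[OF elim])
        also have "\<dots> = ennreal (Hr u * q u ^ (G - 2))"
        proof -
          have "card (I-{k}-{j}) = G - 2" using j k by (simp add: I_def card_Diff_singleton_if)
          then show ?thesis using Hr_bounds[OF elim] q_nonneg[OF elim] by (simp add: ennreal_power ennreal_mult)
        qed
        finally show ?case using elim by simp
      qed
    qed
    finally show ?thesis .
  qed
  have sP: "sets (PiM I (\<lambda>_. D)) = sets (PiM I (\<lambda>_. borel))" by (rule sets_PiM_cong) (auto simp: sD)
  have Rapp: "R \<omega> i = r i \<omega>" if "i < G" for \<omega> i using that by (simp add: R_def I_def)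
  have S_sets: "S \<in> sets M"
  proof -
    have "S = (\<Union>i\<in>I. \<Union>j\<in>I. {\<omega>\<in>space M. i \<noteq> j \<and> \<sigma> < \<bar>r i \<omega> - r j \<omega>\<bar>})"
      by (auto simp: S_def I_def)
    also have "\<dots> \<in> sets M"
    proof (intro sets.finite_UN finI ballI)
      fix i j assume "i \<in> I" "j \<in> I"
      then have [measurable]: "r i \<in> borel_measurable M" "r j \<in> borel_measurable M" using rv by (auto simp: I_def)
      show "{\<omega>\<in>space M. i \<noteq> j \<and> \<sigma> < \<bar>r i \<omega> - r j \<omega>\<bar>} \<in> sets M" by measurable
    qed
    finally show ?thesis .
  qed
  have Sc_eq: "Sc = space M - S" by (auto simp: S_def Sc_def)
  have Sc_sets: "Sc \<in> sets M" unfolding Sc_eq using S_sets by auto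
  have indSc: "(indicator Sc \<omega> :: ennreal) = (\<Sum>k\<in>I. \<Psi> k (R \<omega>))" if \<omega>: "\<omega> \<in> space M" for \<omega>
  proof -
    have "(\<exists>i<G. \<exists>j<G. i \<noteq> j \<and> \<bar>R \<omega> i - R \<omega> j\<bar> > \<sigma>) \<longleftrightarrow> (\<exists>i<G. \<exists>j<G. i \<noteq> j \<and> \<bar>r i \<omega> - r j \<omega>\<bar> > \<sigma>)"
      using Rapp by metis
    then show ?thesis unfolding Psum using \<omega> by (auto simp: Sc_def indicator_def)
  qed
  have Psi_meas'[measurable]: "(\<lambda>x. \<Sum>k\<in>I. \<Psi> k x) \<in> borel_measurable (PiM I (\<lambda>_. borel))"
    by (intro borel_measurable_sum Psi_meas) (simp add: I_def)
  have emSc: "emeasure M Sc = of_nat G * T0"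
  proof -
    have "emeasure M Sc = (\<integral>\<^sup>+ \<omega>. indicator Sc \<omega> \<partial>M)" using Sc_sets by simp
    also have "\<dots> = (\<integral>\<^sup>+ \<omega>. (\<Sum>k\<in>I. \<Psi> k (R \<omega>)) \<partial>M)" by (rule nn_integral_cong) (simp add: indSc)
    also have "\<dots> = (\<integral>\<^sup>+ x. (\<Sum>k\<in>I. \<Psi> k x) \<partial>PiM I (\<lambda>_. D))"
      using transfer[OF Psi_meas'] by simp
    also have "\<dots> = (\<Sum>k\<in>I. \<integral>\<^sup>+ x. \<Psi> k x \<partial>PiM I (\<lambda>_. D))"
    proof (rule nn_integral_sum)
      fix k assume "k \<in> I"
      then show "\<Psi> k \<in> borel_measurable (PiM I (\<lambda>_. D))"
        using Psi_meas measurable_cong_sets[OF sP refl] by blast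
    qed
    also have "\<dots> = of_nat G * T0" using A_k by (simp add: I_def)
    finally show ?thesis .
  qed
  have conv: "enn2real (\<integral>\<^sup>+ u. ennreal (h u) \<partial>D) = (\<integral>u. f u * h u \<partial>lborel)"
    if hm: "h \<in> borel_measurable borel" and hn: "\<And>u. 0 \<le> h u" for h
  proof -
    have [measurable]: "h \<in> borel_measurable borel" by fact
    have "(\<integral>\<^sup>+ u. ennreal (h u) \<partial>D) = (\<integral>\<^sup>+ u. ennreal (f u) * ennreal (h u) \<partial>lborel)"
      unfolding D_def by (subst nn_integral_density) auto
    also have "\<dots> = (\<integral>\<^sup>+ u. ennreal (f u * h u) \<partial>lborel)"
      using assms(4) hn by (simp add: ennreal_mult)
    finally show ?thesis using assms(4) hn
      by (subst integral_eq_nn_integral) auto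
  qed
  have h0_nn: "0 \<le> indicator {0..1} u * q u ^ (G - 1)" for u
    using q_nonneg[of u] by (auto simp: indicator_def)
  have part1: "measure M Sc = real G * (LBINT u:{0..1}. f u * q u ^ (G - 1))"
  proof -
    have "measure M Sc = real G * enn2real T0"
      unfolding measure_def emSc by (simp add: enn2real_mult)
    also have "enn2real T0 = (\<integral>u. f u * (indicator {0..1} u * q u ^ (G - 1)) \<partial>lborel)"
      unfolding T0_def by (rule conv) (use h0_nn in auto)
    also have "\<dots> = (LBINT u:{0..1}. f u * q u ^ (G - 1))"
      unfolding set_lebesgue_integral_def by (rule Bochner_Integration.integral_cong) auto
    finally show ?thesis .
  qed
  have part2: "measure M S = 1 - measure M Sc"
  proof -
    have "S = space M - Sc" using S_sets sets.sets_into_space by (auto simp: Sc_eq)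
    then show ?thesis using prob_compl[OF Sc_sets] by simp
  qed
  define c where "c = ennreal (1 / real G)"
  have r01: "0 \<le> r i \<omega> \<and> r i \<omega> \<le> 1" if "i < G" "\<omega> \<in> space M" for i \<omega>
    using assms(6)[OF that] by auto
  have phat_meas[measurable]: "phat \<in> borel_measurable M"
    unfolding phat_def by (intro borel_measurable_divide borel_measurable_sum) (auto intro: rv)
  have phat_nn: "0 \<le> phat \<omega>" if "\<omega> \<in> space M" for \<omega>
    unfolding phat_def using r01[OF _ that] by (auto intro!: divide_nonneg_nonneg sum_nonneg)
  have ptw: "ennreal (phat \<omega> * indicator Sc \<omega>)
      = (\<Sum>k\<in>I. \<Sum>j\<in>I. c * (ennreal (R \<omega> j) * \<Psi> k (R \<omega>)))" if \<omega>: "\<omega> \<in> space M" for \<omega>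
  proof -
    have "ennreal (phat \<omega> * indicator Sc \<omega>) = c * ennreal (\<Sum>j\<in>I. r j \<omega>) * indicator Sc \<omega>"
    proof -
      have sn: "0 \<le> (\<Sum>j\<in>I. r j \<omega>)" using r01[OF _ \<omega>] by (auto intro!: sum_nonneg simp: I_def)
      have "ennreal (phat \<omega> * indicator Sc \<omega>) = ennreal ((1 / real G) * (\<Sum>j\<in>I. r j \<omega>) * indicator Sc \<omega>)"
        by (simp add: phat_def I_def)
      also have "\<dots> = ennreal (1 / real G) * ennreal (\<Sum>j\<in>I. r j \<omega>) * ennreal (indicator Sc \<omega>)"
      proof -
        have a: "0 \<le> 1 / real G" by simp
        have b: "0 \<le> (indicator Sc \<omega> :: real)" by simp
        show ?thesis using ennreal_mult[OF mult_nonneg_nonneg[OF a sn] b] ennreal_mult[OF a sn] by simp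
      qed
      finally show ?thesis unfolding c_def by (simp add: ennreal_indicator)
    qed
    also have "ennreal (\<Sum>j\<in>I. r j \<omega>) = (\<Sum>j\<in>I. ennreal (R \<omega> j))"
      using r01[OF _ \<omega>] by (subst sum_ennreal[symmetric]) (auto simp: I_def Rapp)
    also have "indicator Sc \<omega> = (\<Sum>k\<in>I. \<Psi> k (R \<omega>))" by (rule indSc[OF \<omega>])
    finally show ?thesis by (simp only: sum_distrib_left sum_distrib_right mult.assoc)
  qed
  have meas_jk: "(\<lambda>x. c * (ennreal (x j) * \<Psi> k x)) \<in> borel_measurable (PiM I (\<lambda>_. borel))"
    if "j \<in> I" "k \<in> I" for j k
  proof -
    have [measurable]: "\<Psi> k \<in> borel_measurable (PiM I (\<lambda>_. borel))" using Psi_meas that by blast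
    have [measurable]: "(\<lambda>x. x j) \<in> borel_measurable (PiM I (\<lambda>_. borel))" using that by simp
    show ?thesis by measurable
  qed
  have nnSc: "(\<integral>\<^sup>+\<omega>. ennreal (phat \<omega> * indicator Sc \<omega>) \<partial>M) = T1 + of_nat (G - 1) * T2"
  proof -
    have "(\<integral>\<^sup>+\<omega>. ennreal (phat \<omega> * indicator Sc \<omega>) \<partial>M)
        = (\<integral>\<^sup>+\<omega>. (\<Sum>k\<in>I. \<Sum>j\<in>I. c * (ennreal (R \<omega> j) * \<Psi> k (R \<omega>))) \<partial>M)"
      by (rule nn_integral_cong) (simp add: ptw)
    also have "\<dots> = (\<integral>\<^sup>+x. (\<Sum>k\<in>I. \<Sum>j\<in>I. c * (ennreal (x j) * \<Psi> k x)) \<partial>PiM I (\<lambda>_. D))"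
    proof -
      have "(\<lambda>x. \<Sum>k\<in>I. \<Sum>j\<in>I. c * (ennreal (x j) * \<Psi> k x)) \<in> borel_measurable (PiM I (\<lambda>_. borel))"
        using meas_jk by (intro borel_measurable_sum) auto
      from transfer[OF this] show ?thesis by simp
    qed
    also have "\<dots> = (\<Sum>k\<in>I. \<Sum>j\<in>I. c * (\<integral>\<^sup>+x. ennreal (x j) * \<Psi> k x \<partial>PiM I (\<lambda>_. D)))"
    proof -
      have m: "(\<lambda>x. c * (ennreal (x j) * \<Psi> k x)) \<in> borel_measurable (PiM I (\<lambda>_. D))" if "j \<in> I" "k \<in> I" for j k
        using meas_jk[OF that] measurable_cong_sets[OF sP refl] by blast
      have m2: "(\<lambda>x. ennreal (x j) * \<Psi> k x) \<in> borel_measurable (PiM I (\<lambda>_. D))" if "j \<in> I" "k \<in> I" for j k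
      proof -
        have [measurable]: "\<Psi> k \<in> borel_measurable (PiM I (\<lambda>_. borel))" using Psi_meas[OF that(2)] .
        have "(\<lambda>x. ennreal (x j) * \<Psi> k x) \<in> borel_measurable (PiM I (\<lambda>_. borel))"
          using that(1) by measurable
        then show ?thesis using measurable_cong_sets[OF sP refl] by blast
      qed
      show ?thesis
        using m m2 by (simp add: nn_integral_sum borel_measurable_sum nn_integral_cmult)
    qed
    also have "\<dots> = (\<Sum>k\<in>I. c * T1 + of_nat (G - 1) * (c * T2))"
    proof (rule sum.cong[OF refl])
      fix k assume k: "k \<in> I"
      have "(\<Sum>j\<in>I. c * (\<integral>\<^sup>+x. ennreal (x j) * \<Psi> k x \<partial>PiM I (\<lambda>_. D)))
          = c * (\<integral>\<^sup>+x. ennreal (x k) * \<Psi> k x \<partial>PiM I (\<lambda>_. D))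
            + (\<Sum>j\<in>I-{k}. c * (\<integral>\<^sup>+x. ennreal (x j) * \<Psi> k x \<partial>PiM I (\<lambda>_. D)))"
        using k finI by (subst sum.remove[of I k]) auto
      also have "\<dots> = c * T1 + (\<Sum>j\<in>I-{k}. c * T2)"
        using B_kk[OF k] B_kj[OF k] by simp
      also have "\<dots> = c * T1 + of_nat (G - 1) * (c * T2)" using cardk[OF k] by simp
      finally show "(\<Sum>j\<in>I. c * (\<integral>\<^sup>+x. ennreal (x j) * \<Psi> k x \<partial>PiM I (\<lambda>_. D))) = c * T1 + of_nat (G - 1) * (c * T2)" .
    qed
    also have "\<dots> = (of_nat G * c) * (T1 + of_nat (G - 1) * T2)"
      by (simp add: I_def distrib_left mult_ac)
    also have "of_nat G * c = 1"
      unfolding c_def using G1 by (simp add: ennreal_of_nat_eq_real_of_nat ennreal_mult[symmetric])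
    finally show ?thesis by simp
  qed
  define h3 where "h3 u = indicator {0..1} u * (u * q u ^ (G - 1)) + real (G - 1) * (indicator {0..1} u * (Hr u * q u ^ (G - 2)))" for u
  have a_nn: "0 \<le> indicator {0..1} u * (u * q u ^ (G - 1))" for u
    using q_nonneg[of u] by (auto simp: indicator_def)
  have b_nn: "0 \<le> indicator {0..1} u * (Hr u * q u ^ (G - 2))" for u
    using q_nonneg[of u] Hr_bounds[of u] by (auto simp: indicator_def)
  have h3_nn: "0 \<le> h3 u" for u unfolding h3_def using a_nn[of u] b_nn[of u] by simp
  have h3_meas[measurable]: "h3 \<in> borel_measurable borel" unfolding h3_def by measurable
  have T12: "T1 + of_nat (G - 1) * T2 = (\<integral>\<^sup>+u. ennreal (h3 u) \<partial>D)"
  proof -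
    have mA: "(\<lambda>u. ennreal (indicator {0..1} u * (u * q u ^ (G - 1)))) \<in> borel_measurable D"
      and mB: "(\<lambda>u. ennreal (indicator {0..1} u * (Hr u * q u ^ (G - 2)))) \<in> borel_measurable D"
    proof -
      have "(\<lambda>u. ennreal (indicator {0..1} u * (u * q u ^ (G - 1)))) \<in> borel_measurable borel"
        "(\<lambda>u. ennreal (indicator {0..1} u * (Hr u * q u ^ (G - 2)))) \<in> borel_measurable borel"
        by measurable
      then show "(\<lambda>u. ennreal (indicator {0..1} u * (u * q u ^ (G - 1)))) \<in> borel_measurable D"
        "(\<lambda>u. ennreal (indicator {0..1} u * (Hr u * q u ^ (G - 2)))) \<in> borel_measurable D"
        using measurable_cong_sets[OF sD refl] by blast+
    qed
    have "(\<integral>\<^sup>+u. ennreal (h3 u) \<partial>D) = (\<integral>\<^sup>+u. ennreal (indicator {0..1} u * (u * q u ^ (G - 1)))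
            + of_nat (G - 1) * ennreal (indicator {0..1} u * (Hr u * q u ^ (G - 2))) \<partial>D)"
      unfolding h3_def using a_nn b_nn
      by (intro nn_integral_cong) (simp add: ennreal_plus ennreal_mult ennreal_of_nat_eq_real_of_nat)
    also have "\<dots> = T1 + of_nat (G - 1) * T2"
      unfolding T1_def T2_def
      apply (subst nn_integral_add)
        apply (rule mA)
       apply (rule borel_measurable_times_ennreal[OF borel_measurable_const mB])
      apply (subst nn_integral_cmult[OF mB])
      apply (rule refl)
      done
    finally show ?thesis by simp
  qed
  have m_eq: "m u = Hr u / q u" for u by (simp add: m_def q_def Hr_def)
  have part3: "(\<integral>\<omega>. phat \<omega> * indicator Sc \<omega> \<partial>M)
           = (LBINT u:{0..1}. (u + real (G - 1) * m u) * f u * q u ^ (G - 1))"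
  proof -
    have "(\<integral>\<omega>. phat \<omega> * indicator Sc \<omega> \<partial>M) = enn2real (\<integral>\<^sup>+\<omega>. ennreal (phat \<omega> * indicator Sc \<omega>) \<partial>M)"
      using Sc_sets phat_nn by (subst integral_eq_nn_integral) (auto intro!: AE_I2)
    also have "\<dots> = enn2real (\<integral>\<^sup>+u. ennreal (h3 u) \<partial>D)" unfolding nnSc T12 ..
    also have "\<dots> = (\<integral>u. f u * h3 u \<partial>lborel)" by (rule conv[OF h3_meas h3_nn])
    also have "\<dots> = (LBINT u:{0..1}. (u + real (G - 1) * m u) * f u * q u ^ (G - 1))"
      unfolding set_lebesgue_integral_def
    proof (rule Bochner_Integration.integral_cong[OF refl])
      fix u
      show "f u * h3 u = indicator {0..1} u *\<^sub>R ((u + real (G - 1) * m u) * f u * q u ^ (G - 1))"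
      proof (cases "u \<in> {0..1}")
        case False then show ?thesis by (simp add: h3_def)
      next
        case True
        have key: "Hr u * q u ^ (G - 2) = m u * q u ^ (G - 1)"
        proof (cases "q u = 0")
          case True
          then have "Hr u = 0" using Hr_bounds[OF \<open>u \<in> {0..1}\<close>] by simp
          then show ?thesis by (simp add: m_eq)
        next
          case False
          have "G - 1 = Suc (G - 2)" using assms(2) by simp
          then show ?thesis using False by (simp add: m_eq)
        qed
        show ?thesis using True key by (simp add: h3_def algebra_simps)
      qed
    qed
    finally show ?thesis .
  qed
  have rint: "integrable M (r i)" if "i < G" for i
    using r01[OF that] rv[OF that] by (intro integrable_const_bound[where B=1]) (auto intro!: AE_I2)
  have rE: "(\<integral>\<omega>. r i \<omega> \<partial>M) = (\<integral>x. x \<partial>D)" if "i < G" for i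
    using integral_distr[OF rv[OF that], of "\<lambda>x. x"] distrD[OF that] by simp
  have Ephat: "(\<integral>\<omega>. phat \<omega> \<partial>M) = p"
  proof -
    have "(\<integral>\<omega>. phat \<omega> \<partial>M) = (\<Sum>i<G. \<integral>\<omega>. r i \<omega> \<partial>M) / real G"
      unfolding phat_def using rint by (simp add: integral_sum)
    also have "\<dots> = (\<Sum>i<G. p) / real G" unfolding p_def using rE G1 by simp
    finally show ?thesis using G1 by simp
  qed
  have phat_int: "integrable M phat"
    unfolding phat_def using rint by (intro integrable_divide integrable_sum) auto
  have int_S: "integrable M (\<lambda>\<omega>. phat \<omega> * indicator A \<omega>)" if "A \<in> sets M" for A
    by (rule integrable_real_mult_indicator[OF that phat_int])
  have ES: "(\<integral>\<omega>. phat \<omega> * indicator S \<omega> \<partial>M) = p - (\<integral>\<omega>. phat \<omega> * indicator Sc \<omega> \<partial>M)"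
  proof -
    have "(\<integral>\<omega>. phat \<omega> * indicator S \<omega> \<partial>M) = (\<integral>\<omega>. phat \<omega> - phat \<omega> * indicator Sc \<omega> \<partial>M)"
      by (rule Bochner_Integration.integral_cong[OF refl]) (auto simp: Sc_eq indicator_def)
    also have "\<dots> = p - (\<integral>\<omega>. phat \<omega> * indicator Sc \<omega> \<partial>M)"
      using phat_int int_S[OF Sc_sets] Ephat by simp
    finally show ?thesis .
  qed
  have part4a: "cond_exp_event M phat S = (p - (\<integral>\<omega>. phat \<omega> * indicator Sc \<omega> \<partial>M)) / measure M S"
    unfolding cond_exp_event_def ES ..
  have part4b: "cond_exp_event M (\<lambda>\<omega>. Ahat i \<omega> - A i \<omega>) S = p - cond_exp_event M phat S"
    if pos: "measure M S > 0" for i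
  proof -
    have "(\<integral>\<omega>. (Ahat i \<omega> - A i \<omega>) * indicator S \<omega> \<partial>M)
        = (\<integral>\<omega>. p * indicator S \<omega> - phat \<omega> * indicator S \<omega> \<partial>M)"
      by (rule Bochner_Integration.integral_cong[OF refl]) (simp add: Ahat_def A_def phat_def p_def algebra_simps)
    also have "\<dots> = p * measure M S - (\<integral>\<omega>. phat \<omega> * indicator S \<omega> \<partial>M)"
    proof -
      have "integrable M (indicator S :: 'a \<Rightarrow> real)"
        using S_sets by (intro integrable_real_indicator) (auto simp: emeasure_eq_measure)
      then show ?thesis using int_S[OF S_sets] S_sets by (subst Bochner_Integration.integral_diff) auto
    qed
    finally show ?thesis unfolding cond_exp_event_def using pos by (simp add: diff_divide_distrib)
  qed
  show ?thesis using part1 part2 part3 part4a part4b by blast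
qed

end
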